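(* Let $s\ge1$. A general binary form $p\in H_{2s}(\mathbb{C}^2)$ can be written as $$p(x,y) = \Bigl(\sum_{k=0}^s t_kx^{s-k}y^k\Bigr)^2 + \Bigl(\sum_{k=1}^s t_{s+k}x^{s-k}y^k\Bigr)^2, \qquad t_k\in\mathbb{C},$$ in exactly $\binom{2s-1}{s}$ different ways. Note that the monomial $x^s$ does not appear in the second form.
   Context: $H_d(\mathbb{C}^n)$ denotes the complex vector space of homogeneous polynomials of degree $d$ in $n$ variables. "A general $p$ has property P" means P holds for all $p$ in a nonempty Zariski-open subset of $H_d(\mathbb{C}^n)$. Two representations are considered the same if they agree up to replacing each of the two squared forms by its negative. *)

theory Defs
  imports Complex_Main
begin

text \<open>Points of complex affine space of dimension N, as coefficient functions
  supported on indices 0..N-1.\<close>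
definition affspace :: "nat \<Rightarrow> (nat \<Rightarrow> complex) set" where
  "affspace N = {c. \<forall>j\<ge>N. c j = 0}"

inductive poly_fun :: "nat \<Rightarrow> ((nat \<Rightarrow> complex) \<Rightarrow> complex) \<Rightarrow> bool" for N where
  pf_const: "poly_fun N (\<lambda>c. a)"
| pf_var: "i < N \<Longrightarrow> poly_fun N (\<lambda>c. c i)"
| pf_add: "poly_fun N f \<Longrightarrow> poly_fun N g \<Longrightarrow> poly_fun N (\<lambda>c. f c + g c)"
| pf_mult: "poly_fun N f \<Longrightarrow> poly_fun N g \<Longrightarrow> poly_fun N (\<lambda>c. f c * g c)"

definition zariski_open :: "nat \<Rightarrow> (nat \<Rightarrow> complex) set \<Rightarrow> bool" where
  "zariski_open N U \<longleftrightarrow> (\<exists>S. (\<forall>f\<in>S. poly_fun N f) \<and>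
      U = {c \<in> affspace N. \<exists>f\<in>S. f c \<noteq> 0})"

text \<open>Binary form of degree d with coefficients c: sum of c j x^(d-j) y^j.
  H_d(C^2) is identified with affspace (d+1).\<close>
definition binform :: "nat \<Rightarrow> (nat \<Rightarrow> complex) \<Rightarrow> complex \<Rightarrow> complex \<Rightarrow> complex" where
  "binform d c x y = (\<Sum>j=0..d. c j * x ^ (d - j) * y ^ j)"

definition general_form :: "nat \<Rightarrow> ((nat \<Rightarrow> complex) \<Rightarrow> bool) \<Rightarrow> bool" where
  "general_form d P \<longleftrightarrow> (\<exists>U. zariski_open (d+1) U \<and> U \<noteq> {} \<and> (\<forall>p\<in>U. P p))"

text \<open>The two forms built from parameters t_0..t_{2s}: coefficients of x^(s-k) y^k.\<close>
definition formA :: "nat \<Rightarrow> (nat \<Rightarrow> complex) \<Rightarrow> (nat \<Rightarrow> complex)" where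
  "formA s t = (\<lambda>k. if k \<le> s then t k else 0)"

definition formB :: "nat \<Rightarrow> (nat \<Rightarrow> complex) \<Rightarrow> (nat \<Rightarrow> complex)" where
  "formB s t = (\<lambda>k. if 1 \<le> k \<and> k \<le> s then t (s + k) else 0)"

definition is_sos_rep :: "nat \<Rightarrow> (nat \<Rightarrow> complex) \<Rightarrow> (nat \<Rightarrow> complex) \<Rightarrow> bool" where
  "is_sos_rep s p t \<longleftrightarrow> (\<forall>x y. binform (2*s) p x y =
      (binform s (formA s t) x y)\<^sup>2 + (binform s (formB s t) x y)\<^sup>2)"

text \<open>Representations counted up to replacing each squared form by its negative.\<close>
definition sos_classes :: "nat \<Rightarrow> (nat \<Rightarrow> complex) \<Rightarrow>
    ((nat \<Rightarrow> complex) set \<times> (nat \<Rightarrow> complex) set) set" where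
  "sos_classes s p = (\<lambda>t. ({formA s t, (\<lambda>k. - formA s t k)}, {formB s t, (\<lambda>k. - formB s t k)}))
      ` {t. is_sos_rep s p t}"

end

theory Submission
  imports Defs "HOL-Computational_Algebra.Fundamental_Theorem_Algebra" "Subresultants.Subresultant_Gcd" "HOL-Computational_Algebra.Field_as_Ring"
begin


lemma pf_sum: "(\<And>i. i \<in> I \<Longrightarrow> poly_fun N (f i)) \<Longrightarrow> poly_fun N (\<lambda>c. \<Sum>i\<in>I. f i c)"
  by (induction I rule: infinite_finite_induct) (auto intro: poly_fun.intros)

lemma pf_prod: "(\<And>i. i \<in> I \<Longrightarrow> poly_fun N (f i)) \<Longrightarrow> poly_fun N (\<lambda>c. \<Prod>i\<in>I. f i c)"
  by (induction I rule: infinite_finite_induct) (auto intro: poly_fun.intros)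

lemma pf_if: "poly_fun N f \<Longrightarrow> poly_fun N g \<Longrightarrow> poly_fun N (\<lambda>c. if b then f c else g c)"
  by (cases b) auto

definition hp :: "nat \<Rightarrow> (nat \<Rightarrow> complex) \<Rightarrow> complex poly" where
  "hp d c = (\<Sum>j\<le>d. monom (c j) j)"

lemma coeff_hp: "coeff (hp d c) k = (if k \<le> d then c k else 0)"
  by (simp add: hp_def coeff_sum coeff_monom)

lemma degree_hp: "degree (hp d c) \<le> d"
  unfolding hp_def by (intro degree_sum_le) (auto intro: order.trans[OF degree_monom_le])

lemma pf_coeff_hp: "poly_fun (Suc d) (\<lambda>c. coeff (hp d c) k)"
proof (cases "k \<le> d")
  case True
  then have "(\<lambda>c. coeff (hp d c) k) = (\<lambda>c. c k)" by (simp add: coeff_hp)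
  then show ?thesis using True by (simp add: pf_var)
next
  case False
  then have "(\<lambda>c. coeff (hp d c) k) = (\<lambda>c. 0)" by (simp add: coeff_hp)
  then show ?thesis by (simp add: pf_const)
qed

lemma pf_coeff_pderiv_hp: "poly_fun (Suc d) (\<lambda>c. coeff (pderiv (hp d c)) k)"
  unfolding coeff_pderiv by (intro pf_mult pf_const pf_coeff_hp)

lemma pf_det:
  assumes "\<And>i j. i < n \<Longrightarrow> j < n \<Longrightarrow> poly_fun N (\<lambda>c. M c $$ (i,j))"
    and "\<And>c. dim_row (M c) = n" "\<And>c. dim_col (M c) = n"
  shows "poly_fun N (\<lambda>c. det (M c))"
proof -
  have eq: "(\<lambda>c. det (M c)) = (\<lambda>c. \<Sum>p\<in>{p. p permutes {0..<n}}. of_int (sign p) * (\<Prod>i\<in>{0..<n}. M c $$ (i, p i)))"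
    by (simp add: det_def assms)
  show ?thesis unfolding eq
  proof (intro pf_sum pf_mult pf_const pf_prod)
    fix p i assume "p \<in> {p. p permutes {0..<n}}" "i \<in> {0..<n}"
    then have "i < n" "p i < n" by (auto simp: permutes_in_image)
    then show "poly_fun N (\<lambda>c. M c $$ (i, p i))" by (rule assms(1))
  qed
qed

lemma pf_sylv:
  assumes "\<And>k. poly_fun N (\<lambda>c. coeff (Q c) k)" "\<And>k. poly_fun N (\<lambda>c. coeff (Q' c) k)"
  shows "poly_fun N (\<lambda>c. resultant_sub m n (Q c) (Q' c))"
  unfolding resultant_sub_def
proof (rule pf_det[where n="m+n"])
  fix i j assume ij: "i < m + n" "j < m + n"
  show "poly_fun N (\<lambda>c. sylvester_mat_sub m n (Q c) (Q' c) $$ (i, j))"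
    using ij by (simp add: sylvester_mat_sub_def pf_if assms pf_const)
qed auto



lemma gcd_root:
  fixes f g :: "complex poly"
  assumes "degree (gcd f g) \<noteq> 0"
  shows "\<exists>a. poly f a = 0 \<and> poly g a = 0"
proof -
  have "\<not> constant (poly (gcd f g))" using assms by (simp add: constant_degree)
  then obtain a where "poly (gcd f g) a = 0" using fundamental_theorem_of_algebra by blast
  then have "[:-a,1:] dvd gcd f g" by (simp add: poly_eq_0_iff_dvd)
  then have "[:-a,1:] dvd f" "[:-a,1:] dvd g" by (auto intro: dvd_trans)
  then show ?thesis by (auto simp: poly_eq_0_iff_dvd)
qed

lemma common_root_gcd:
  fixes f g :: "complex poly"
  assumes "poly f a = 0" "poly g a = 0" "f \<noteq> 0"
  shows "degree (gcd f g) \<noteq> 0"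
proof -
  have "[:-a,1:] dvd f" "[:-a,1:] dvd g" using assms by (auto simp: poly_eq_0_iff_dvd)
  then have "[:-a,1:] dvd gcd f g" by simp
  moreover have "gcd f g \<noteq> 0" using assms by simp
  ultimately have "degree [:-a,1:] \<le> degree (gcd f g)" by (rule dvd_imp_degree_le)
  then show ?thesis by simp
qed

definition gdisc :: "nat \<Rightarrow> (nat \<Rightarrow> complex) \<Rightarrow> complex" where
  "gdisc s c = c 0 * c (2*s) * resultant_sub (2*s) (2*s-1) (hp (2*s) c) (pderiv (hp (2*s) c))"

lemma pf_gdisc: "poly_fun (Suc (2*s)) (gdisc s)"
  unfolding gdisc_def
  by (intro pf_mult pf_var pf_sylv pf_coeff_hp pf_coeff_pderiv_hp) auto

lemma degree_hp_eq: "c d \<noteq> 0 \<Longrightarrow> degree (hp d c) = d"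
proof -
  assume "c d \<noteq> 0"
  then have "coeff (hp d c) d \<noteq> 0" by (simp add: coeff_hp)
  then have "d \<le> degree (hp d c)" by (rule le_degree)
  then show ?thesis using degree_hp[of d c] by simp
qed

lemma gdisc_good:
  assumes s: "s \<ge> 1" and g: "gdisc s c \<noteq> 0"
  shows "c 0 \<noteq> 0" "degree (hp (2*s) c) = 2*s" "rsquarefree (hp (2*s) c)"
proof -
  let ?P = "hp (2*s) c"
  show "c 0 \<noteq> 0" using g by (auto simp: gdisc_def)
  have c2: "c (2*s) \<noteq> 0" using g by (auto simp: gdisc_def)
  then show dP: "degree ?P = 2*s" by (rule degree_hp_eq)
  have dP': "degree (pderiv ?P) = 2*s - 1" by (simp add: degree_pderiv dP)
  have "resultant ?P (pderiv ?P) \<noteq> 0"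
    using g by (simp add: resultant_sub dP dP' gdisc_def)
  then have gd: "degree (gcd ?P (pderiv ?P)) = 0" by (simp add: resultant_0_gcd)
  have P0: "?P \<noteq> 0" using dP s by auto
  show "rsquarefree ?P"
    unfolding rsquarefree_roots using common_root_gcd[OF _ _ P0] gd by blast
qed

definition cstar :: "nat \<Rightarrow> nat \<Rightarrow> complex" where
  "cstar s = (\<lambda>j. if j = 0 then -1 else if j = 2*s then 1 else 0)"

lemma cstar_aff: "cstar s \<in> affspace (Suc (2*s))"
  by (auto simp: affspace_def cstar_def)

lemma hp_cstar: "s \<ge> 1 \<Longrightarrow> hp (2*s) (cstar s) = monom 1 (2*s) - 1"
  by (auto simp: poly_eq_iff coeff_hp cstar_def coeff_monom)

lemma gdisc_cstar: assumes s: "s \<ge> 1" shows "gdisc s (cstar s) \<noteq> 0"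
proof -
  let ?P = "hp (2*s) (cstar s)"
  have P: "?P = monom 1 (2*s) - 1" using hp_cstar[OF s] .
  have dP: "degree ?P = 2*s" using s by (intro degree_hp_eq) (auto simp: cstar_def)
  have dP': "degree (pderiv ?P) = 2*s - 1" by (simp add: degree_pderiv dP)
  have "degree (gcd ?P (pderiv ?P)) = 0"
  proof (rule ccontr)
    assume "degree (gcd ?P (pderiv ?P)) \<noteq> 0"
    then obtain a where a: "poly ?P a = 0" "poly (pderiv ?P) a = 0" using gcd_root by blast
    have "pderiv ?P = monom (of_nat (2*s)) (2*s - 1)"
      unfolding P by (simp add: pderiv_diff pderiv_monom)
    then have "a = 0" using a(2) s by (simp add: poly_monom)
    then show False using a(1) s unfolding P by (simp add: poly_monom power_0_left)
  qed
  then have "resultant ?P (pderiv ?P) \<noteq> 0" by (simp add: resultant_0_gcd)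
  then have r: "resultant_sub (2*s) (2*s-1) ?P (pderiv ?P) \<noteq> 0" by (simp add: resultant_sub dP dP')
  have "cstar s 0 = -1" "cstar s (2*s) = 1" using s by (auto simp: cstar_def)
  then show ?thesis using r by (simp add: gdisc_def)
qed



lemma binform_1: "binform d c 1 y = poly (hp d c) y"
  by (simp add: binform_def hp_def poly_sum poly_monom atLeast0AtMost)

lemma binform_hom:
  assumes x: "x \<noteq> 0"
  shows "binform d c x y = x^d * binform d c 1 (y/x)"
proof -
  have "binform d c x y = (\<Sum>j=0..d. x^d * (c j * 1 ^ (d - j) * (y/x) ^ j))"
    unfolding binform_def
  proof (rule sum.cong[OF refl])
    fix j assume "j \<in> {0..d}"
    then have "x^d = x^(d-j) * x^j" by (simp add: power_add[symmetric])
    then show "c j * x ^ (d - j) * y ^ j = x^d * (c j * 1 ^ (d - j) * (y/x) ^ j)"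
      using x by (simp add: power_divide field_simps)
  qed
  then show ?thesis by (simp add: binform_def sum_distrib_left)
qed

lemma binform_cont: "isCont (\<lambda>x. binform d c x y) x0"
  unfolding binform_def by (intro continuous_intros)

lemma zero_at_0:
  fixes g :: "complex \<Rightarrow> complex"
  assumes "isCont g 0" "\<And>x. x \<noteq> 0 \<Longrightarrow> g x = 0"
  shows "g 0 = 0"
proof -
  have "(g \<longlongrightarrow> g 0) (at 0)" using assms(1) by (simp add: isCont_def)
  moreover have "(g \<longlongrightarrow> 0) (at 0)"
    by (rule tendsto_eventually) (auto simp: eventually_at_filter assms(2))
  ultimately show ?thesis by (rule LIM_unique)
qed

lemma sos_iff:
  "is_sos_rep s p t \<longleftrightarrow> hp (2*s) p = (hp s (formA s t))^2 + (hp s (formB s t))^2"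
  (is "_ \<longleftrightarrow> ?P = ?A^2 + ?B^2")
proof
  assume "is_sos_rep s p t"
  then have "\<And>y. binform (2*s) p 1 y = (binform s (formA s t) 1 y)\<^sup>2 + (binform s (formB s t) 1 y)\<^sup>2"
    unfolding is_sos_rep_def by blast
  then have "poly ?P = poly (?A^2 + ?B^2)" by (auto simp: binform_1)
  then show "?P = ?A^2 + ?B^2" by (simp add: poly_eq_poly_eq_iff)
next
  assume eq: "?P = ?A^2 + ?B^2"
  have one: "binform (2*s) p 1 y = (binform s (formA s t) 1 y)\<^sup>2 + (binform s (formB s t) 1 y)\<^sup>2" for y
    by (simp add: binform_1 eq)
  have nz: "binform (2*s) p x y = (binform s (formA s t) x y)\<^sup>2 + (binform s (formB s t) x y)\<^sup>2"
    if x: "x \<noteq> 0" for x y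
  proof -
    have "x^(2*s) = (x^s)^2" by (simp add: power_mult[symmetric] mult.commute)
    then show ?thesis unfolding binform_hom[OF x] one[of "y/x"]
      by (simp add: power_mult_distrib distrib_left)
  qed
  show "is_sos_rep s p t"
    unfolding is_sos_rep_def
  proof (intro allI)
    fix x y
    show "binform (2*s) p x y = (binform s (formA s t) x y)\<^sup>2 + (binform s (formB s t) x y)\<^sup>2"
    proof (cases "x = 0")
      case False then show ?thesis by (rule nz)
    next
      case True
      let ?g = "\<lambda>x. binform (2*s) p x y - ((binform s (formA s t) x y)\<^sup>2 + (binform s (formB s t) x y)\<^sup>2)"
      have "isCont ?g 0" by (intro continuous_intros binform_cont)
      then have "?g 0 = 0" by (rule zero_at_0) (simp add: nz)
      then show ?thesis using True by simp
    qed
  qed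
qed



lemma rsq_factor:
  fixes X Y :: "complex poly"
  assumes "X * Y = P" "rsquarefree P"
  shows "rsquarefree X"
proof -
  have P0: "P \<noteq> 0" using assms(2) by (simp add: rsquarefree_def)
  then have X0: "X \<noteq> 0" "Y \<noteq> 0" using assms(1) by auto
  have "order a X = 0 \<or> order a X = 1" for a
  proof -
    have "order a P = order a X + order a Y" using assms(1) P0 by (metis order_mult)
    moreover have "order a P = 0 \<or> order a P = 1" using assms(2) by (simp add: rsquarefree_def)
    ultimately show ?thesis by auto
  qed
  then show ?thesis using X0 by (simp add: rsquarefree_def)
qed

lemma rsq_disj:
  fixes X Y :: "complex poly"
  assumes "X * Y = P" "rsquarefree P" "poly X z = 0" "poly Y z = 0"
  shows False
proof -
  have P0: "P \<noteq> 0" using assms(2) by (simp add: rsquarefree_def)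
  then have X0: "X \<noteq> 0" "Y \<noteq> 0" using assms(1) by auto
  have "order z P = order z X + order z Y" using assms(1) P0 by (metis order_mult)
  moreover have "order z X \<noteq> 0" "order z Y \<noteq> 0" using assms X0 by (auto simp: order_root)
  moreover have "order z P = 0 \<or> order z P = 1" using assms(2) by (simp add: rsquarefree_def)
  ultimately show False by auto
qed

lemma decomp:
  fixes X :: "complex poly"
  assumes "rsquarefree X"
  shows "X = Polynomial.smult (lead_coeff X) (\<Prod>z\<in>{z. poly X z = 0}. [:-z,1:])"
  using complex_poly_decompose_rsquarefree[OF assms] by simp

lemma degree_linprod: "degree (\<Prod>z\<in>S. [:-z,1::complex:]) = card S"
proof (cases "finite S")
  case True
  then show ?thesis by (subst degree_prod_sum_eq) auto
qed simp

lemma poly_linprod: "finite S \<Longrightarrow> poly (\<Prod>z\<in>S. [:-z,1::complex:]) w = 0 \<longleftrightarrow> w \<in> S"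
  by (simp add: poly_prod prod_zero_iff)

lemma card_roots_rsq:
  fixes X :: "complex poly"
  assumes "rsquarefree X"
  shows "card {z. poly X z = 0} = degree X"
proof -
  have X0: "X \<noteq> 0" using assms by (simp add: rsquarefree_def)
  have "degree X = degree (Polynomial.smult (lead_coeff X) (\<Prod>z\<in>{z. poly X z = 0}. [:-z,1:]))"
    using decomp[OF assms] by simp
  also have "\<dots> = degree (\<Prod>z\<in>{z. poly X z = 0}. [:-z,1::complex:])" using X0 by simp
  also have "\<dots> = card {z. poly X z = 0}" by (rule degree_linprod)
  finally show ?thesis by simp
qed

lemma smult_eq_self: "Polynomial.smult k (P::complex poly) = P \<Longrightarrow> P \<noteq> 0 \<Longrightarrow> k = 1"
proof -
  assume a: "Polynomial.smult k P = P" "P \<noteq> 0"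
  then have "coeff (Polynomial.smult k P) (degree P) = coeff P (degree P)" by simp
  then have "k * lead_coeff P = lead_coeff P" by simp
  then show "k = 1" using a(2) by simp
qed

lemma core:
  fixes X Y X' Y' P :: "complex poly"
  assumes XY: "X*Y = P" and XY': "X'*Y' = P" and sq: "rsquarefree P" and P0: "poly P 0 \<noteq> 0"
    and ZX: "{z. poly X z = 0} = {z. poly X' z = 0}" and ZY: "{z. poly Y z = 0} = {z. poly Y' z = 0}"
    and e: "poly X 0 = poly Y 0" and e': "poly X' 0 = poly Y' 0"
  shows "(X = X' \<and> Y = Y') \<or> (X = -X' \<and> Y = -Y')"
proof -
  have rX: "rsquarefree X" using rsq_factor[OF XY sq] .
  have rY: "rsquarefree Y" using rsq_factor[of Y X P] XY sq by (simp add: mult.commute)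
  have rX': "rsquarefree X'" using rsq_factor[OF XY' sq] .
  have rY': "rsquarefree Y'" using rsq_factor[of Y' X' P] XY' sq by (simp add: mult.commute)
  have nz: "lead_coeff X' \<noteq> 0" "lead_coeff Y' \<noteq> 0" "lead_coeff X \<noteq> 0" "lead_coeff Y \<noteq> 0"
    using rX rY rX' rY' by (auto simp: rsquarefree_def)
  define a where "a = lead_coeff X / lead_coeff X'"
  define b where "b = lead_coeff Y / lead_coeff Y'"
  have gen: "U = Polynomial.smult (lead_coeff U / lead_coeff U') U'"
    if "rsquarefree U" "rsquarefree U'" "{z. poly U z = 0} = {z. poly U' z = 0}" "lead_coeff U' \<noteq> 0"
    for U U' :: "complex poly"
  proof -
    let ?Q = "\<Prod>z\<in>{z. poly U z = 0}. [:-z,1:]"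
    have u: "U = Polynomial.smult (lead_coeff U) ?Q" by (rule decomp[OF that(1)])
    define c' where "c' = lead_coeff U'"
    have c'0: "c' \<noteq> 0" using that(4) by (simp add: c'_def)
    have u': "U' = Polynomial.smult c' ?Q" using decomp[OF that(2)] that(3) by (simp add: c'_def)
    have "Polynomial.smult (lead_coeff U / c') U' = Polynomial.smult (lead_coeff U) ?Q"
      using c'0 u' by simp
    then show ?thesis using u by (simp add: c'_def)
  qed
  have Xa: "X = Polynomial.smult a X'" unfolding a_def by (rule gen[OF rX rX' ZX nz(1)])
  have Yb: "Y = Polynomial.smult b Y'" unfolding b_def by (rule gen[OF rY rY' ZY nz(2)])
  have Pnz: "P \<noteq> 0" using sq by (simp add: rsquarefree_def)
  have "Polynomial.smult (a*b) P = P" using XY XY' Xa Yb by (simp add: mult_smult_left mult_smult_right mult.commute)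
  then have ab: "a*b = 1" using Pnz by (rule smult_eq_self)
  have X'0: "poly X' 0 \<noteq> 0" using P0 XY' by auto
  have "a * poly X' 0 = b * poly X' 0" using e e' Xa Yb by simp
  then have "a = b" using X'0 by simp
  then have "a^2 = 1" using ab by (simp add: power2_eq_square)
  then have "a = 1 \<or> a = -1" by (simp add: power2_eq_1_iff)
  then show ?thesis using Xa Yb \<open>a = b\<close> by auto
qed



lemma card_image_rel:
  assumes "\<And>x y. x \<in> T \<Longrightarrow> y \<in> T \<Longrightarrow> f x = f y \<longleftrightarrow> g x = g y"
  shows "card (f ` T) = card (g ` T)"
proof -
  let ?H = "(\<lambda>x. (f x, g x)) ` T"
  have "inj_on fst ?H" using assms by (auto simp: inj_on_def)
  then have 1: "card (fst ` ?H) = card ?H" by (rule card_image)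
  have "inj_on snd ?H" using assms by (auto simp: inj_on_def)
  then have 2: "card (snd ` ?H) = card ?H" by (rule card_image)
  have "fst ` ?H = f ` T" "snd ` ?H = g ` T" by (auto simp: image_image)
  then show ?thesis using 1 2 by simp
qed

lemma pair_neg_eq: "({a, - a} = {b, - b}) \<longleftrightarrow> (a = b \<or> a = - (b::'a::ab_group_add))"
  by auto

locale goodp =
  fixes s :: nat and p :: "nat \<Rightarrow> complex"
  assumes s1: "s \<ge> 1" and p0: "p 0 \<noteq> 0" and dP: "degree (hp (2*s) p) = 2*s"
    and sqf: "rsquarefree (hp (2*s) p)"
begin

definition "PP = hp (2*s) p"
definition "RR = {z. poly PP z = 0}"
definition "Ap t = hp s (formA s t)"
definition "Bp t = hp s (formB s t)"
definition "FF t = Ap t + Polynomial.smult \<i> (Bp t)"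
definition "GG t = Ap t - Polynomial.smult \<i> (Bp t)"
definition "TT = {t. is_sos_rep s p t}"
definition "ZZ q = {z. poly (q::complex poly) z = 0}"
definition "cls t = ({formA s t, \<lambda>k. - formA s t k}, {formB s t, \<lambda>k. - formB s t k})"
definition "r0 = (SOME r. r \<in> RR)"
definition "phi t = ZZ (FF t)"
definition "psi t = (if r0 \<in> phi t then RR - phi t else phi t)"

lemma PP0: "poly PP 0 \<noteq> 0"
  using p0 by (simp add: PP_def poly_0_coeff_0 coeff_hp)

lemma PPnz: "PP \<noteq> 0" using sqf by (simp add: PP_def rsquarefree_def)

lemma sqP: "rsquarefree PP" using sqf by (simp add: PP_def)

lemma cardRR: "card RR = 2*s"
  using card_roots_rsq[OF sqP] dP by (simp add: RR_def PP_def)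

lemma finRR: "finite RR" using PPnz by (simp add: RR_def poly_roots_finite)

lemma r0: "r0 \<in> RR"
proof -
  have "RR \<noteq> {}" using cardRR s1 by auto
  then obtain x where "x \<in> RR" by blast
  then show ?thesis unfolding r0_def by (rule someI)
qed

lemma zero_notin_RR: "0 \<notin> RR" using PP0 by (simp add: RR_def)

lemma FG_mult: "FF t * GG t = (Ap t)^2 + (Bp t)^2"
  by (simp add: FF_def GG_def algebra_simps power2_eq_square mult_smult_left mult_smult_right)

lemma TT_iff: "t \<in> TT \<longleftrightarrow> PP = FF t * GG t"
  by (simp add: TT_def sos_iff FG_mult PP_def Ap_def Bp_def)

lemma coeffA: "coeff (Ap t) = formA s t"
  by (rule ext) (simp add: Ap_def coeff_hp formA_def)

lemma coeffB: "coeff (Bp t) = formB s t"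
  by (rule ext) (simp add: Bp_def coeff_hp formB_def)

lemma FG0: "poly (FF t) 0 = poly (GG t) 0"
proof -
  have "poly (Bp t) 0 = 0" by (simp add: poly_0_coeff_0 coeffB formB_def)
  then show ?thesis by (simp add: FF_def GG_def)
qed

lemma degF: "degree (FF t) \<le> s"
  unfolding FF_def Ap_def Bp_def
  by (intro degree_add_le degree_hp order.trans[OF degree_smult_le])

lemma degG: "degree (GG t) \<le> s"
  unfolding GG_def Ap_def Bp_def
  by (intro degree_diff_le degree_hp order.trans[OF degree_smult_le])

lemma A_rec: "Ap t = Polynomial.smult (1/2) (FF t + GG t)"
  by (rule poly_eqI) (simp only: FF_def GG_def coeff_add coeff_diff coeff_smult, simp add: field_simps)

lemma B_rec: "Bp t = Polynomial.smult (-\<i>/2) (FF t - GG t)"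
  by (rule poly_eqI) (simp only: FF_def GG_def coeff_add coeff_diff coeff_smult, simp add: field_simps)

end


lemma setpsi:
  assumes "X \<subseteq> R" "Y \<subseteq> R" "r \<in> R"
  shows "(if r \<in> X then R - X else X) = (if r \<in> Y then R - Y else Y) \<longleftrightarrow> (X = Y \<or> X = R - Y)"
proof (cases "r \<in> X"; cases "r \<in> Y")
  assume "r \<in> X" "r \<in> Y" then show ?thesis using assms by auto
next
  assume "r \<in> X" "r \<notin> Y" then show ?thesis using assms by auto
next
  assume "r \<notin> X" "r \<in> Y" then show ?thesis using assms by auto
next
  assume "r \<notin> X" "r \<notin> Y" then show ?thesis using assms by auto
qed

context goodp begin

lemma TT_props:
  assumes t: "t \<in> TT"
  shows "ZZ (FF t) \<union> ZZ (GG t) = RR" "ZZ (FF t) \<inter> ZZ (GG t) = {}"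
    "card (ZZ (FF t)) = s" "card (ZZ (GG t)) = s" "ZZ (GG t) = RR - ZZ (FF t)"
proof -
  have m: "FF t * GG t = PP" using t TT_iff by simp
  have m': "GG t * FF t = PP" using m by (simp add: mult.commute)
  show u: "ZZ (FF t) \<union> ZZ (GG t) = RR" unfolding ZZ_def RR_def m[symmetric] by auto
  show d: "ZZ (FF t) \<inter> ZZ (GG t) = {}" using rsq_disj[OF m sqP] by (auto simp: ZZ_def)
  have rF: "rsquarefree (FF t)" by (rule rsq_factor[OF m sqP])
  have rG: "rsquarefree (GG t)" by (rule rsq_factor[OF m' sqP])
  have "FF t \<noteq> 0" "GG t \<noteq> 0" using m PPnz by auto
  then have "degree PP = degree (FF t) + degree (GG t)" using degree_mult_eq m by metis
  then have "degree (FF t) + degree (GG t) = 2*s" using dP by (simp add: PP_def)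
  then have "degree (FF t) = s" "degree (GG t) = s" using degF[of t] degG[of t] by auto
  then show cF: "card (ZZ (FF t)) = s" "card (ZZ (GG t)) = s"
    using card_roots_rsq[OF rF] card_roots_rsq[OF rG] by (auto simp: ZZ_def)
  show "ZZ (GG t) = RR - ZZ (FF t)" using u d by blast
qed

definition "same t t' \<longleftrightarrow> (FF t = FF t' \<and> GG t = GG t') \<or> (FF t = - FF t' \<and> GG t = - GG t')
   \<or> (FF t = GG t' \<and> GG t = FF t') \<or> (FF t = - GG t' \<and> GG t = - FF t')"

lemma formA_eq: "formA s t = formA s t' \<longleftrightarrow> Ap t = Ap t'"
  by (metis coeffA poly_eq_iff)

lemma formA_neg: "formA s t = (\<lambda>k. - formA s t' k) \<longleftrightarrow> Ap t = - Ap t'"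
  by (metis (no_types, lifting) coeffA coeff_minus poly_eq_iff ext)

lemma formB_eq: "formB s t = formB s t' \<longleftrightarrow> Bp t = Bp t'"
  by (metis coeffB poly_eq_iff)

lemma formB_neg: "formB s t = (\<lambda>k. - formB s t' k) \<longleftrightarrow> Bp t = - Bp t'"
  by (metis (no_types, lifting) coeffB coeff_minus poly_eq_iff ext)

lemma pair_neg_fun: "({f, \<lambda>k. - f k} = {g, \<lambda>k. - g k}) \<longleftrightarrow> (f = g \<or> f = (\<lambda>k. - (g::nat\<Rightarrow>complex) k))"
proof
  assume "{f, \<lambda>k. - f k} = {g, \<lambda>k. - g k}"
  then have "f \<in> {g, \<lambda>k. - g k}" by (metis insertI1)
  then show "f = g \<or> f = (\<lambda>k. - g k)" by blast
next
  assume "f = g \<or> f = (\<lambda>k. - g k)"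
  then show "{f, \<lambda>k. - f k} = {g, \<lambda>k. - g k}" by auto
qed

lemma cls_AB: "cls t = cls t' \<longleftrightarrow> (Ap t = Ap t' \<or> Ap t = - Ap t') \<and> (Bp t = Bp t' \<or> Bp t = - Bp t')"
proof -
  have "cls t = cls t' \<longleftrightarrow> (formA s t = formA s t' \<or> formA s t = (\<lambda>k. - formA s t' k))
     \<and> (formB s t = formB s t' \<or> formB s t = (\<lambda>k. - formB s t' k))"
    unfolding cls_def prod.inject pair_neg_fun ..
  also have "\<dots> \<longleftrightarrow> (Ap t = Ap t' \<or> Ap t = - Ap t') \<and> (Bp t = Bp t' \<or> Bp t = - Bp t')"
    unfolding formA_eq formB_eq formA_neg formB_neg ..
  finally show ?thesis .
qed

lemma cls_same: "cls t = cls t' \<longleftrightarrow> same t t'"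
proof
  assume "cls t = cls t'"
  then have "(Ap t = Ap t' \<or> Ap t = - Ap t') \<and> (Bp t = Bp t' \<or> Bp t = - Bp t')" by (simp add: cls_AB)
  then consider "Ap t = Ap t'" "Bp t = Bp t'" | "Ap t = Ap t'" "Bp t = - Bp t'"
    | "Ap t = - Ap t'" "Bp t = Bp t'" | "Ap t = - Ap t'" "Bp t = - Bp t'" by blast
  then show "same t t'"
  proof cases
    case 1 then show ?thesis by (simp add: same_def FF_def GG_def)
  next
    case 2
    then have "FF t = GG t' \<and> GG t = FF t'" by (simp add: FF_def GG_def)
    then show ?thesis by (simp add: same_def)
  next
    case 3
    then have "FF t = - GG t' \<and> GG t = - FF t'" by (simp add: FF_def GG_def)
    then show ?thesis by (simp add: same_def)
  next
    case 4
    then have "FF t = - FF t' \<and> GG t = - GG t'" by (simp add: FF_def GG_def)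
    then show ?thesis by (simp add: same_def)
  qed
next
  assume "same t t'"
  then consider "FF t = FF t'" "GG t = GG t'" | "FF t = - FF t'" "GG t = - GG t'"
    | "FF t = GG t'" "GG t = FF t'" | "FF t = - GG t'" "GG t = - FF t'"
    unfolding same_def by blast
  then have "(Ap t = Ap t' \<or> Ap t = - Ap t') \<and> (Bp t = Bp t' \<or> Bp t = - Bp t')"
  proof cases
    case 1 then show ?thesis by (simp add: A_rec[of t] A_rec[of t'] B_rec[of t] B_rec[of t'])
  next
    case 2
    then have "Ap t = - Ap t'" "Bp t = - Bp t'"
      unfolding A_rec[of t] A_rec[of t'] B_rec[of t] B_rec[of t'] by (simp_all add: smult_add_right smult_diff_right)
    then show ?thesis by simp
  next
    case 3
    then have "Ap t = Ap t'" "Bp t = - Bp t'"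
      unfolding A_rec[of t] A_rec[of t'] B_rec[of t] B_rec[of t'] by (simp_all add: add.commute smult_diff_right)
    then show ?thesis by simp
  next
    case 4
    then have "Ap t = - Ap t'" "Bp t = Bp t'"
      unfolding A_rec[of t] A_rec[of t'] B_rec[of t] B_rec[of t'] by (simp_all add: smult_add_right smult_diff_right)
    then show ?thesis by simp
  qed
  then show "cls t = cls t'" by (simp add: cls_AB)
qed

lemma ZZ_neg: "ZZ (- X) = ZZ X" by (simp add: ZZ_def)

lemma phi_sub: "t \<in> TT \<Longrightarrow> phi t \<subseteq> RR"
  using TT_props(1)[of t] by (auto simp: phi_def)

lemma psi_same:
  assumes t: "t \<in> TT" and t': "t' \<in> TT"
  shows "psi t = psi t' \<longleftrightarrow> same t t'"
proof -
  have ps: "psi t = psi t' \<longleftrightarrow> (phi t = phi t' \<or> phi t = RR - phi t')"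
    unfolding psi_def by (rule setpsi[OF phi_sub[OF t] phi_sub[OF t'] r0])
  have G': "ZZ (GG t') = RR - phi t'" using TT_props(5)[OF t'] by (simp add: phi_def)
  have m: "FF t * GG t = PP" "FF t' * GG t' = PP" using t t' TT_iff by auto
  have m': "GG t' * FF t' = PP" using m by (simp add: mult.commute)
  show ?thesis unfolding ps
  proof
    assume "same t t'"
    then consider "FF t = FF t'" | "FF t = - FF t'" | "FF t = GG t'" | "FF t = - GG t'"
      unfolding same_def by blast
    then show "phi t = phi t' \<or> phi t = RR - phi t'"
    proof cases
      case 1 then show ?thesis by (simp add: phi_def)
    next
      case 2 then show ?thesis by (simp add: phi_def ZZ_neg)
    next
      case 3 then show ?thesis using G' by (simp add: phi_def)
    next
      case 4 then show ?thesis using G' by (simp add: phi_def ZZ_neg)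
    qed
  next
    assume "phi t = phi t' \<or> phi t = RR - phi t'"
    then show "same t t'"
    proof
      assume e: "phi t = phi t'"
      have e2: "ZZ (GG t) = ZZ (GG t')" using TT_props(5)[OF t] TT_props(5)[OF t'] e by (simp add: phi_def)
      have e1: "{z. poly (FF t) z = 0} = {z. poly (FF t') z = 0}" using e by (simp add: phi_def ZZ_def)
      have e2': "{z. poly (GG t) z = 0} = {z. poly (GG t') z = 0}" using e2 by (simp add: ZZ_def)
      have "(FF t = FF t' \<and> GG t = GG t') \<or> (FF t = - FF t' \<and> GG t = - GG t')"
        by (rule core[OF m(1) m(2) sqP PP0 e1 e2' FG0[of t] FG0[of t']])
      then show ?thesis unfolding same_def by blast
    next
      assume e: "phi t = RR - phi t'"
      have e1: "ZZ (FF t) = ZZ (GG t')" using G' e by (simp add: phi_def)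
      have "RR - phi t = phi t'" using e phi_sub[OF t'] by blast
      then have e2: "ZZ (GG t) = ZZ (FF t')" using TT_props(5)[OF t] by (simp add: phi_def)
      have e1': "{z. poly (FF t) z = 0} = {z. poly (GG t') z = 0}" using e1 by (simp add: ZZ_def)
      have e2': "{z. poly (GG t) z = 0} = {z. poly (FF t') z = 0}" using e2 by (simp add: ZZ_def)
      have "(FF t = GG t' \<and> GG t = FF t') \<or> (FF t = - GG t' \<and> GG t = - FF t')"
        by (rule core[OF m(1) m' sqP PP0 e1' e2' FG0[of t] FG0[of t', symmetric]])
      then show ?thesis unfolding same_def by blast
    qed
  qed
qed

end


context goodp begin

definition "Fam = {S. S \<subseteq> RR - {r0} \<and> card S = s}"

lemma psi_in: assumes t: "t \<in> TT" shows "psi t \<in> Fam"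
proof (cases "r0 \<in> phi t")
  case True
  then have "psi t = ZZ (GG t)" using TT_props(5)[OF t] by (simp add: psi_def phi_def)
  then show ?thesis using True TT_props(4)[OF t] TT_props(5)[OF t] by (auto simp: Fam_def phi_def)
next
  case False
  then show ?thesis using phi_sub[OF t] TT_props(3)[OF t] by (auto simp: Fam_def psi_def phi_def)
qed

lemma surj:
  assumes S: "S \<subseteq> RR - {r0}" "card S = s"
  shows "\<exists>t\<in>TT. psi t = S"
proof -
  have finS: "finite S" using S finRR finite_subset by blast
  have SR: "S \<subseteq> RR" using S by blast
  define F0 where "F0 = (\<Prod>z\<in>S. [:-z,1::complex:])"
  define G0 where "G0 = (\<Prod>z\<in>RR - S. [:-z,1::complex:])"
  define L where "L = lead_coeff PP"
  have L0: "L \<noteq> 0" using PPnz by (simp add: L_def)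
  have "PP = Polynomial.smult L (\<Prod>z\<in>RR. [:-z,1:])"
    using decomp[OF sqP] by (simp add: L_def RR_def)
  also have "(\<Prod>z\<in>RR. [:-z,1::complex:]) = G0 * F0"
    unfolding F0_def G0_def by (rule prod.subset_diff[OF SR finRR])
  finally have PPe: "PP = Polynomial.smult L (F0 * G0)" by (simp add: mult.commute)
  have "poly F0 0 = 0 \<longleftrightarrow> 0 \<in> S" unfolding F0_def by (rule poly_linprod[OF finS])
  then have F00: "poly F0 0 \<noteq> 0" using zero_notin_RR SR by blast
  have "poly G0 0 = 0 \<longleftrightarrow> 0 \<in> RR - S" unfolding G0_def by (rule poly_linprod) (simp add: finRR)
  then have G00: "poly G0 0 \<noteq> 0" using zero_notin_RR by blast
  define lam where "lam = csqrt (L * poly G0 0 / poly F0 0)"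
  have lam2: "lam^2 = L * poly G0 0 / poly F0 0" by (simp add: lam_def)
  have lam0: "lam \<noteq> 0" using lam2 L0 F00 G00 by auto
  define F1 where "F1 = Polynomial.smult lam F0"
  define G1 where "G1 = Polynomial.smult (L / lam) G0"
  have FG1: "F1 * G1 = PP" using lam0 by (simp add: F1_def G1_def PPe mult_smult_left mult_smult_right)
  have e0: "poly F1 0 = poly G1 0"
  proof -
    have "lam * lam * poly F0 0 = L * poly G0 0" using lam2 F00 by (simp add: power2_eq_square field_simps)
    then show ?thesis using lam0 by (simp add: F1_def G1_def field_simps)
  qed
  have dF0: "degree F0 = s" using S unfolding F0_def degree_linprod by simp
  have "card (RR - S) = s" using S cardRR finS SR by (simp add: card_Diff_subset)
  then have dG0: "degree G0 = s" unfolding G0_def degree_linprod by simp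
  have dF1: "degree F1 \<le> s" using dF0 by (simp add: F1_def)
  have dG1: "degree G1 \<le> s" using dG0 by (simp add: G1_def)
  define A1 where "A1 = Polynomial.smult (1/2) (F1 + G1)"
  define B1 where "B1 = Polynomial.smult (-\<i>/2) (F1 - G1)"
  have dA1: "degree A1 \<le> s" unfolding A1_def
    by (intro order.trans[OF degree_smult_le] degree_add_le dF1 dG1)
  have dB1: "degree B1 \<le> s" unfolding B1_def
    by (intro order.trans[OF degree_smult_le] degree_diff_le dF1 dG1)
  have B10: "coeff B1 0 = 0" using e0 by (simp add: B1_def poly_0_coeff_0[symmetric])
  define t where "t = (\<lambda>k. if k \<le> s then coeff A1 k else coeff B1 (k - s))"
  have fA: "formA s t = coeff A1"
  proof
    fix k show "formA s t k = coeff A1 k"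
      using dA1 by (cases "k \<le> s") (auto simp: formA_def t_def coeff_eq_0)
  qed
  have fB: "formB s t = coeff B1"
  proof
    fix k show "formB s t k = coeff B1 k"
    proof (cases "k = 0")
      case True then show ?thesis using B10 by (simp add: formB_def)
    next
      case False
      then show ?thesis using dB1 by (cases "k \<le> s") (auto simp: formB_def t_def coeff_eq_0)
    qed
  qed
  have At: "Ap t = A1" unfolding Ap_def fA hp_def by (rule poly_as_sum_of_monoms'[OF dA1])
  have Bt: "Bp t = B1" unfolding Bp_def fB hp_def by (rule poly_as_sum_of_monoms'[OF dB1])
  have Ft: "FF t = F1"
    by (rule poly_eqI) (simp only: FF_def At Bt A1_def B1_def coeff_add coeff_diff coeff_smult, simp add: field_simps)
  have Gt: "GG t = G1"
    by (rule poly_eqI) (simp only: GG_def At Bt A1_def B1_def coeff_add coeff_diff coeff_smult, simp add: field_simps)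
  have tT: "t \<in> TT" using FG1 by (simp add: TT_iff Ft Gt)
  have "phi t = {z. poly F0 z = 0}" using lam0 by (simp add: phi_def Ft ZZ_def F1_def)
  also have "\<dots> = S" unfolding F0_def using poly_linprod[OF finS] by blast
  finally have "phi t = S" .
  then have "psi t = S" using S by (auto simp: psi_def)
  then show ?thesis using tT by blast
qed

lemma psi_img: "psi ` TT = Fam"
proof
  show "psi ` TT \<subseteq> Fam" using psi_in by blast
  show "Fam \<subseteq> psi ` TT"
  proof
    fix S assume "S \<in> Fam"
    then have "S \<subseteq> RR - {r0}" "card S = s" by (simp_all add: Fam_def)
    then obtain t where "t \<in> TT" "psi t = S" using surj by blast
    then show "S \<in> psi ` TT" by blast
  qed
qed

lemma count: "card (sos_classes s p) = (2*s - 1) choose s"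
proof -
  have "sos_classes s p = cls ` TT" by (simp add: sos_classes_def cls_def TT_def)
  then have "card (sos_classes s p) = card (psi ` TT)"
    using card_image_rel[of TT cls psi] cls_same psi_same by simp
  also have "\<dots> = card (RR - {r0}) choose s" unfolding psi_img Fam_def
    by (rule n_subsets) (simp add: finRR)
  also have "card (RR - {r0}) = 2*s - 1" using r0 finRR cardRR by simp
  finally show ?thesis .
qed

end


theorem theorem5p1:
  fixes s :: nat
  assumes "s \<ge> 1"
  shows "general_form (2*s) (\<lambda>p. card (sos_classes s p) = (2*s - 1) choose s)"
proof -
  define U where "U = {c \<in> affspace (2*s+1). \<exists>f\<in>{gdisc s}. f c \<noteq> 0}"
  have zo: "zariski_open (2*s+1) U"
    unfolding zariski_open_def U_def using pf_gdisc[of s] by (intro exI[of _ "{gdisc s}"]) simp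
  have ne: "U \<noteq> {}"
    using cstar_aff[of s] gdisc_cstar[OF assms] unfolding U_def by auto
  have "card (sos_classes s p) = (2*s - 1) choose s" if "p \<in> U" for p
  proof -
    have g: "gdisc s p \<noteq> 0" using that by (simp add: U_def)
    interpret goodp s p
      using gdisc_good[OF assms g] assms by unfold_locales auto
    show ?thesis by (rule count)
  qed
  then show ?thesis unfolding general_form_def using zo ne by blast
qed


end
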